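(* For any $S\ge1$, $Q\ge0$ and $x\in\mathbb{R}$, $$\psi(x,S,Q)<S|x|\big[2\ln(1+2x^2)+3Q+3S\big].$$
   Context: For $\theta\in\mathbb{R}$, $S>0$, $Q\ge0$: $\psi^*(\theta,S,Q)=\exp\big(\max_{\beta\in[-1/2,1/2]}(\theta\beta-\beta^2S^2)-Q\big)$, and $\psi(x,S,Q)=\sup_{\theta\in\mathbb{R}}(\theta x-\psi^*(\theta,S,Q))$. *)

theory Defs
  imports "HOL-Analysis.Analysis"
begin

definition psi_star :: "real \<Rightarrow> real \<Rightarrow> real \<Rightarrow> real" where
  "psi_star \<theta> S Q = exp ((SUP \<beta>\<in>{-1/2..1/2::real}. \<theta> * \<beta> - \<beta>^2 * S^2) - Q)"

definition psi :: "real \<Rightarrow> real \<Rightarrow> real \<Rightarrow> real" where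
  "psi x S Q = (SUP \<theta>\<in>(UNIV::real set). \<theta> * x - psi_star \<theta> S Q)"

end

theory Submission
  imports Defs
begin

lemma psi_star_ge:
  fixes \<beta> \<theta> S Q :: real
  assumes b: "\<beta> \<in> {-1/2..1/2}"
  shows "exp (\<theta>*\<beta> - \<beta>^2*S^2 - Q) \<le> psi_star \<theta> S Q"
proof -
  have bdd: "bdd_above ((\<lambda>\<beta>. \<theta>*\<beta> - \<beta>^2*S^2) ` {-1/2..1/2::real})"
  proof (rule bdd_aboveI2[where M="\<bar>\<theta>\<bar>"])
    fix y :: real assume "y \<in> {-1/2..1/2}"
    then have "\<bar>y\<bar> \<le> 1" by auto
    then have "\<bar>\<theta>*y\<bar> \<le> \<bar>\<theta>\<bar>" by (simp add: abs_mult mult_left_le)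
    moreover have "y^2*S^2 \<ge> 0" by simp
    ultimately show "\<theta>*y - y^2*S^2 \<le> \<bar>\<theta>\<bar>" by linarith
  qed
  have "\<theta>*\<beta> - \<beta>^2*S^2 \<le> (SUP \<beta>\<in>{-1/2..1/2::real}. \<theta> * \<beta> - \<beta>^2 * S^2)"
    by (rule cSUP_upper[OF b bdd])
  then show ?thesis unfolding psi_star_def by simp
qed

lemma exp_fenchel:
  fixes A y :: real
  assumes "A > 0"
  shows "A * (y - ln A + 1) \<le> exp y"
proof -
  have "1 + (y - ln A) \<le> exp (y - ln A)" by (rule exp_ge_add_one_self)
  also have "exp (y - ln A) = exp y / A" using assms by (simp add: exp_diff)
  finally show ?thesis using assms by (simp add: field_simps)
qed

lemma aux_lin:
  fixes y S Q L :: real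
  assumes "y < Q + S + L - 3/4" "1 \<le> S" "0 \<le> Q"
  shows "2*y < 2 * L + 3*Q + 3*S"
  using assms by linarith

theorem lemma12:
  fixes x S Q :: real
  assumes "S \<ge> 1" and "Q \<ge> 0"
  shows "psi x S Q < S * \<bar>x\<bar> * (2 * ln (1 + 2 * x^2) + 3 * Q + 3 * S)"
proof (cases "x = 0")
  case True
  have "\<forall>\<theta>. \<theta>*x - psi_star \<theta> S Q \<le> - exp (- Q)"
  proof
    fix \<theta> :: real
    have "exp (\<theta>*0 - 0^2*S^2 - Q) \<le> psi_star \<theta> S Q" by (rule psi_star_ge) auto
    then show "\<theta>*x - psi_star \<theta> S Q \<le> - exp (- Q)" using True by simp
  qed
  then have "psi x S Q \<le> - exp (- Q)" unfolding psi_def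
    by (intro cSUP_least) auto
  moreover have "- exp (- Q) < 0" by simp
  ultimately have "psi x S Q < 0" by linarith
  then show ?thesis using True by simp
next
  case False
  have S0: "S > 0" using assms by simp
  define b where "b = 1/(2*S)"
  have b0: "b > 0" and bh: "b \<le> 1/2" using assms by (auto simp: b_def field_simps)
  define A where "A = \<bar>x\<bar>/b"
  have A0: "A > 0" using False b0 by (simp add: A_def)
  have Ab: "A * b = \<bar>x\<bar>" using b0 by (simp add: A_def)
  define c where "c = b^2*S^2 + Q"
  define B where "B = A * (c + ln A - 1)"
  define \<beta> where "\<beta> = (if x > 0 then b else -b)"
  have \<beta>in: "\<beta> \<in> {-1/2..1/2}" using b0 bh by (auto simp: \<beta>_def)
  have key: "\<forall>\<theta>. \<theta>*x - psi_star \<theta> S Q \<le> max B 0"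
  proof
    fix \<theta> :: real
    have ps: "exp (\<theta>*\<beta> - \<beta>^2*S^2 - Q) \<le> psi_star \<theta> S Q" by (rule psi_star_ge[OF \<beta>in])
    show "\<theta>*x - psi_star \<theta> S Q \<le> max B 0"
    proof (cases "\<theta>*x \<le> 0")
      case True
      have "0 < exp (\<theta>*\<beta> - \<beta>^2*S^2 - Q)" by simp
      then show ?thesis using True ps by linarith
    next
      case neg: False
      define t where "t = \<bar>\<theta>\<bar>"
      have tb: "\<theta>*\<beta> = t*b" and tx: "\<theta>*x = t*\<bar>x\<bar>"
      proof -
        have "(\<theta>>0 \<and> x>0) \<or> (\<theta><0 \<and> x<0)" using neg zero_less_mult_iff[of \<theta> x] by linarith
        then show "\<theta>*\<beta> = t*b" "\<theta>*x = t*\<bar>x\<bar>" by (auto simp: \<beta>_def t_def)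
      qed
      have "\<beta>^2 = b^2" by (simp add: \<beta>_def)
      then have e: "\<theta>*\<beta> - \<beta>^2*S^2 - Q = t*b - c" using tb by (simp add: c_def)
      have "A * ((t*b - c) - ln A + 1) \<le> exp (t*b - c)" by (rule exp_fenchel[OF A0])
      moreover have "A * ((t*b - c) - ln A + 1) = t*\<bar>x\<bar> - B"
        using Ab by (simp add: B_def algebra_simps)
      ultimately have "t*\<bar>x\<bar> - exp (t*b - c) \<le> B" by linarith
      then show ?thesis using ps e tx by simp
    qed
  qed
  then have le: "psi x S Q \<le> max B 0" unfolding psi_def
    by (intro cSUP_least) auto
  have ax: "\<bar>x\<bar> > 0" using False by simp
  have "x^2 > 0" using False by simp
  then have l1: "ln (1 + 2*x^2) > 0" by (intro ln_gt_zero) simp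
  have R0: "0 < S * \<bar>x\<bar> * (2 * ln (1 + 2 * x^2) + 3 * Q + 3 * S)"
    using S0 ax l1 assms by (intro mult_pos_pos) auto
  have Aeq: "A = 2*S*\<bar>x\<bar>" by (simp add: A_def b_def)
  have ceq: "c = 1/4 + Q" using S0 by (simp add: c_def b_def power2_eq_square field_simps)
  have lnA: "ln A = ln 2 + ln S + ln \<bar>x\<bar>" using S0 ax by (simp add: Aeq ln_mult)
  have lnS: "ln S \<le> S - 1" using S0 by (rule ln_le_minus_one)
  have lnx: "ln \<bar>x\<bar> \<le> ln (1 + 2*x^2)"
  proof -
    have h1: "0 \<le> (\<bar>x\<bar> - 1)^2" by simp
    have h2: "(\<bar>x\<bar> - 1)^2 = x^2 - 2*\<bar>x\<bar> + 1" by (simp add: power2_diff)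
    have "\<bar>x\<bar> \<le> 1 + 2*x^2" using h1 h2 by (smt (verit) zero_le_power2)
    then show ?thesis using ax by simp
  qed
  have ln2: "ln (2::real) < 1" using ln_2_less_1 by simp
  have i1: "c + ln A - 1 < Q + S + ln (1 + 2 * x^2) - 3/4"
    using ceq lnA lnS lnx ln2 by linarith
  have inner: "2*(c + ln A - 1) < 2 * ln (1 + 2 * x^2) + 3 * Q + 3 * S"
    using aux_lin[OF i1 assms] .
  have "B = S * \<bar>x\<bar> * (2*(c + ln A - 1))" by (simp add: B_def Aeq)
  also have "\<dots> < S * \<bar>x\<bar> * (2 * ln (1 + 2 * x^2) + 3 * Q + 3 * S)"
    using inner S0 ax by (intro mult_strict_left_mono) auto
  finally have "B < S * \<bar>x\<bar> * (2 * ln (1 + 2 * x^2) + 3 * Q + 3 * S)" .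
  then show ?thesis using le R0 by linarith
qed

end
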